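(* For every instance of PKP, every optimal solution set $S^*$ satisfies $\sum_{j\in S^*}\log(|p_j|)\ge \log(p_{\max})$, where $p_{\max}=\max_{j\in N}|p_j|$ and $\log$ is the base-2 logarithm.
   Context: The Product Knapsack Problem (PKP): items $j\in N=\{1,\dots,n\}$ with integer weights $w_j$ and integer profits $p_j$, and a positive integer capacity $C$; find $S\subseteq N$ with $\sum_{j\in S}w_j\le C$ maximizing $\prod_{j\in S}p_j$ (the empty set has value $0$). Instances are assumed to satisfy: (a) $w_j\le C$ for all $j$; (b) $p_j\ne 0$ for all $j$; (c) for each $j$ with $p_j<0$ there is $j'\ne j$ with $p_{j'}<0$ and $w_j+w_{j'}\le C$; (d) $w_j\ge 0$ for all $j$; (e) $p_j<0$ whenever $w_j=0$. *)

theory Defs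
  imports Complex_Main
begin

definition pkp_instance :: "nat \<Rightarrow> (nat \<Rightarrow> int) \<Rightarrow> (nat \<Rightarrow> int) \<Rightarrow> int \<Rightarrow> bool" where
  "pkp_instance n w p C \<longleftrightarrow>
     C > 0 \<and>
     (\<forall>j\<in>{1..n}. w j \<le> C) \<and>
     (\<forall>j\<in>{1..n}. p j \<noteq> 0) \<and>
     (\<forall>j\<in>{1..n}. p j < 0 \<longrightarrow> (\<exists>j'\<in>{1..n}. j' \<noteq> j \<and> p j' < 0 \<and> w j + w j' \<le> C)) \<and>
     (\<forall>j\<in>{1..n}. w j \<ge> 0) \<and>
     (\<forall>j\<in>{1..n}. w j = 0 \<longrightarrow> p j < 0)"

definition pkp_feasible :: "nat \<Rightarrow> (nat \<Rightarrow> int) \<Rightarrow> int \<Rightarrow> nat set \<Rightarrow> bool" where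
  "pkp_feasible n w C S \<longleftrightarrow> S \<subseteq> {1..n} \<and> (\<Sum>j\<in>S. w j) \<le> C"

definition pkp_value :: "(nat \<Rightarrow> int) \<Rightarrow> nat set \<Rightarrow> int" where
  "pkp_value p S = (if S = {} then 0 else (\<Prod>j\<in>S. p j))"

definition pkp_optimal :: "nat \<Rightarrow> (nat \<Rightarrow> int) \<Rightarrow> (nat \<Rightarrow> int) \<Rightarrow> int \<Rightarrow> nat set \<Rightarrow> bool" where
  "pkp_optimal n w p C S \<longleftrightarrow> pkp_feasible n w C S \<and>
     (\<forall>T. pkp_feasible n w C T \<longrightarrow> pkp_value p T \<le> pkp_value p S)"

end

theory Submission
  imports Defs
begin

theorem lemma3:
  fixes n :: nat and w p :: "nat \<Rightarrow> int" and C :: int and S :: "nat set"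
  assumes "n \<ge> 1"
    and "pkp_instance n w p C"
    and "pkp_optimal n w p C S"
  shows "(\<Sum>j\<in>S. log 2 \<bar>real_of_int (p j)\<bar>) \<ge> log 2 (real_of_int (Max ((\<lambda>j. \<bar>p j\<bar>) ` {1..n})))"
proof -
  define M where "M = Max ((\<lambda>j. \<bar>p j\<bar>) ` {1..n})"
  have ne: "{1..n} \<noteq> {}" using assms(1) by auto
  have "M \<in> (\<lambda>j. \<bar>p j\<bar>) ` {1..n}" unfolding M_def using ne by (intro Max_in) auto
  then obtain k where k: "k \<in> {1..n}" "M = \<bar>p k\<bar>" by auto
  have inst: "C > 0" "\<forall>j\<in>{1..n}. w j \<le> C" "\<forall>j\<in>{1..n}. p j \<noteq> 0"
    "\<forall>j\<in>{1..n}. p j < 0 \<longrightarrow> (\<exists>j'\<in>{1..n}. j' \<noteq> j \<and> p j' < 0 \<and> w j + w j' \<le> C)"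
    using assms(2) unfolding pkp_instance_def by auto
  have feasS: "S \<subseteq> {1..n}" and opt: "\<And>T. pkp_feasible n w C T \<Longrightarrow> pkp_value p T \<le> pkp_value p S"
    using assms(3) unfolding pkp_optimal_def pkp_feasible_def by auto
  have finS: "finite S" using feasS finite_subset by blast
  have Mge: "M \<le> pkp_value p S"
  proof (cases "p k > 0")
    case True
    have "pkp_feasible n w C {k}" using k inst(2) unfolding pkp_feasible_def by auto
    from opt[OF this] have "pkp_value p {k} \<le> pkp_value p S" .
    moreover have "pkp_value p {k} = p k" by (simp add: pkp_value_def)
    ultimately show ?thesis using True k(2) by linarith
  next
    case False
    then have neg: "p k < 0" using inst(3) k by force
    then obtain j where j: "j \<in> {1..n}" "j \<noteq> k" "p j < 0" "w k + w j \<le> C" using inst(4) k by blast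
    have "pkp_feasible n w C {k, j}" using k j unfolding pkp_feasible_def by auto
    from opt[OF this] have "pkp_value p {k, j} \<le> pkp_value p S" .
    moreover have "pkp_value p {k, j} = p k * p j" using j(2) by (simp add: pkp_value_def)
    ultimately have "p k * p j \<le> pkp_value p S" by linarith
    moreover have "M \<le> p k * p j"
    proof -
      have "p k * p j = \<bar>p k\<bar> * \<bar>p j\<bar>" using neg j(3) by (simp add: abs_of_neg)
      moreover have "\<bar>p k\<bar> * 1 \<le> \<bar>p k\<bar> * \<bar>p j\<bar>" using j(3) by (intro mult_left_mono) auto
      ultimately show ?thesis using k by simp
    qed
    ultimately show ?thesis by linarith
  qed
  have M1: "M \<ge> 1" proof - have "p k \<noteq> 0" using k(1) inst(3) by blast then show ?thesis using k(2) by linarith qed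
  then have Sne: "S \<noteq> {}" using Mge by (auto simp: pkp_value_def)
  have nz: "\<And>j. j \<in> S \<Longrightarrow> \<bar>real_of_int (p j)\<bar> \<noteq> 0" using feasS inst(3) by auto
  have "(\<Sum>j\<in>S. log 2 \<bar>real_of_int (p j)\<bar>) = (\<Sum>j\<in>S. ln \<bar>real_of_int (p j)\<bar>) / ln 2"
    by (simp add: log_def sum_divide_distrib)
  also have "\<dots> = ln (\<Prod>j\<in>S. \<bar>real_of_int (p j)\<bar>) / ln 2"
    using ln_prod[OF finS nz] by simp
  also have "\<dots> = log 2 \<bar>real_of_int (pkp_value p S)\<bar>"
    using Sne by (simp add: log_def pkp_value_def abs_prod)
  finally have eq: "(\<Sum>j\<in>S. log 2 \<bar>real_of_int (p j)\<bar>) = log 2 \<bar>real_of_int (pkp_value p S)\<bar>" .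
  have "log 2 (real_of_int M) \<le> log 2 \<bar>real_of_int (pkp_value p S)\<bar>"
    using M1 Mge by (subst log_le_cancel_iff) auto
  then show ?thesis using eq M_def by simp
qed

end
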